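(* In the standard LLP setup, for all $N,M\ge1$: $L(G,\gamma^M_{cons})\subseteq L(G,\gamma^N_{optm})$.
   Context: Standard LLP setup. $\Sigma=\Sigma_c\,\dot\cup\,\Sigma_{uc}$ is a finite alphabet partitioned into controllable and uncontrollable events. The plant $G$ has generated language $L(G)$ and marked language $L_m(G)$ with $L(G)=\overline{L_m(G)}$ ($\overline{M}$ = set of prefixes of strings in $M$). The legal language $K\subseteq L_m(G)$ satisfies $K=\overline{K}\cap L_m(G)$. For a prefix-closed $L$, $M$ is controllable w.r.t. $L$ if $\overline{M}\Sigma_{uc}\cap L\subseteq\overline{M}$. For a language $L$ and $s\in\Sigma^*$: $L/s=\{t: st\in L\}$; $L|_N=\{t\in L:|t|\le N\}$; $\Sigma_{L(G)}(s)=\{\sigma\in\Sigma: s\sigma\in L(G)\}$. $M^{\uparrow/s|_N}$ is the supremal sublanguage of $M$ controllable w.r.t. $L(G)/s|_N$. Conservative attitude: $f^N_{cons}(s)=[K/s|_{N-1}]^{\uparrow/s|_N}$; optimistic attitude: $f^N_{optm}(s)=[K/s|_N\cup(\overline{K}/s|_N\setminus\overline{K}/s|_{N-1})]^{\uparrow/s|_N}$. For $a\in\{cons,optm\}$ the control policy is $\gamma^N_a(s)=(\overline{f^N_a(s)}\cap\Sigma)\cup(\Sigma_{uc}\cap\Sigma_{L(G)}(s))$. Closed-loop language $L(G,\gamma)$: $\epsilon\in L(G,\gamma)$, and $s\sigma\in L(G,\gamma)$ iff $s\in L(G,\gamma)$, $s\sigma\in L(G)$, $\sigma\in\gamma(s)$.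 *)

theory Defs
  imports Main
begin

text \<open>Strings over a finite alphabet of type 'a (the alphabet is UNIV :: 'a set, 'a finite)
  are lists; languages are sets of lists.\<close>

definition pre :: "'a list set \<Rightarrow> 'a list set" where
  "pre M = {t. \<exists>u. t @ u \<in> M}"

definition quot :: "'a list set \<Rightarrow> 'a list \<Rightarrow> 'a list set" where
  "quot L s = {t. s @ t \<in> L}"

definition trunc :: "'a list set \<Rightarrow> nat \<Rightarrow> 'a list set" where
  "trunc L N = {t \<in> L. length t \<le> N}"

definition controllable :: "'a set \<Rightarrow> 'a list set \<Rightarrow> 'a list set \<Rightarrow> bool" where
  "controllable Euc M L \<longleftrightarrow>
     (\<forall>t \<sigma>. t \<in> pre M \<and> \<sigma> \<in> Euc \<and> t @ [\<sigma>] \<in> L \<longrightarrow> t @ [\<sigma>] \<in> pre M)"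

definition supcon :: "'a set \<Rightarrow> 'a list set \<Rightarrow> 'a list set \<Rightarrow> 'a list set" where
  "supcon Euc M L = \<Union>{M'. M' \<subseteq> M \<and> controllable Euc M' L}"

definition f_cons :: "'a set \<Rightarrow> 'a list set \<Rightarrow> 'a list set \<Rightarrow> nat \<Rightarrow> 'a list \<Rightarrow> 'a list set" where
  "f_cons Euc LG K N s = supcon Euc (trunc (quot K s) (N - 1)) (trunc (quot LG s) N)"

definition f_optm :: "'a set \<Rightarrow> 'a list set \<Rightarrow> 'a list set \<Rightarrow> nat \<Rightarrow> 'a list \<Rightarrow> 'a list set" where
  "f_optm Euc LG K N s = supcon Euc
     (trunc (quot K s) N \<union> (trunc (quot (pre K) s) N - trunc (quot (pre K) s) (N - 1)))
     (trunc (quot LG s) N)"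

definition policy :: "'a set \<Rightarrow> 'a list set \<Rightarrow> ('a list \<Rightarrow> 'a list set) \<Rightarrow> 'a list \<Rightarrow> 'a set" where
  "policy Euc LG F s = {\<sigma>. [\<sigma>] \<in> pre (F s)} \<union> (Euc \<inter> {\<sigma>. s @ [\<sigma>] \<in> LG})"

inductive_set closed_loop :: "'a list set \<Rightarrow> ('a list \<Rightarrow> 'a set) \<Rightarrow> 'a list set"
  for LG :: "'a list set" and \<gamma> :: "'a list \<Rightarrow> 'a set" where
  Nil: "[] \<in> closed_loop LG \<gamma>"
| snoc: "s \<in> closed_loop LG \<gamma> \<Longrightarrow> s @ [\<sigma>] \<in> LG \<Longrightarrow> \<sigma> \<in> \<gamma> s \<Longrightarrow> s @ [\<sigma>] \<in> closed_loop LG \<gamma>"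

end

theory Submission
  imports Defs
begin

lemma pre_mono: "A \<subseteq> B \<Longrightarrow> pre A \<subseteq> pre B"
  unfolding pre_def by blast

lemma key:
  assumes N: "N \<ge> 1" and Mg: "M \<ge> 1" and sig: "[\<sigma>] \<in> pre (f_cons Euc LG K M s)"
  shows "[\<sigma>] \<in> pre (f_optm Euc LG K N s)"
proof -
  from sig obtain u where "[\<sigma>] @ u \<in> f_cons Euc LG K M s" unfolding pre_def by blast
  then obtain A where A: "A \<subseteq> trunc (quot K s) (M - 1)"
    and cA: "controllable Euc A (trunc (quot LG s) M)" and uA: "[\<sigma>] @ u \<in> A"
    unfolding f_cons_def supcon_def by blast
  define B where "B = {t \<in> pre A. length t \<le> N \<and> (t \<in> quot K s \<or> length t = N)}"
  have preB: "pre B = {t \<in> pre A. length t \<le> N}"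
  proof
    show "pre B \<subseteq> {t \<in> pre A. length t \<le> N}"
      unfolding B_def pre_def by auto
  next
    show "{t \<in> pre A. length t \<le> N} \<subseteq> pre B"
    proof
      fix t assume t: "t \<in> {t \<in> pre A. length t \<le> N}"
      then obtain w where w: "t @ w \<in> A" and lt: "length t \<le> N" unfolding pre_def by auto
      have wK: "t @ w \<in> quot K s" using w A unfolding trunc_def by auto
      show "t \<in> pre B"
      proof (cases "length (t @ w) \<le> N")
        case True
        have "t @ w \<in> pre A" using w unfolding pre_def by (metis append_Nil2 mem_Collect_eq)
        hence "t @ w \<in> B" using True wK unfolding B_def by auto
        thus ?thesis unfolding pre_def by blast
      next
        case False
        define v where "v = take N (t @ w)"
        have lv: "length v = N" using False unfolding v_def by simp
        have "v \<in> pre A" using w unfolding v_def pre_def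
          by (metis (mono_tags, lifting) append_take_drop_id mem_Collect_eq)
        hence vB: "v \<in> B" using lv unfolding B_def by auto
        have "v = t @ take (N - length t) w" unfolding v_def using lt by simp
        thus ?thesis using vB unfolding pre_def by blast
      qed
    qed
  qed
  have Bsub: "B \<subseteq> trunc (quot K s) N \<union> (trunc (quot (pre K) s) N - trunc (quot (pre K) s) (N - 1))"
  proof
    fix t assume t: "t \<in> B"
    then obtain w where w: "t @ w \<in> A" unfolding B_def pre_def by auto
    hence "s @ t @ w \<in> K" using A unfolding trunc_def quot_def by auto
    hence "t \<in> quot (pre K) s" unfolding quot_def pre_def by (metis append_assoc mem_Collect_eq)
    thus "t \<in> trunc (quot K s) N \<union> (trunc (quot (pre K) s) N - trunc (quot (pre K) s) (N - 1))"
      using t N unfolding B_def trunc_def by auto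
  qed
  have cB: "controllable Euc B (trunc (quot LG s) N)"
    unfolding controllable_def
  proof (intro allI impI)
    fix t e assume h: "t \<in> pre B \<and> e \<in> Euc \<and> t @ [e] \<in> trunc (quot LG s) N"
    hence tA: "t \<in> pre A" using preB by auto
    then obtain w where w: "t @ w \<in> A" unfolding pre_def by auto
    hence "length (t @ w) \<le> M - 1" using A unfolding trunc_def by auto
    hence "length (t @ [e]) \<le> M" using Mg by simp
    hence "t @ [e] \<in> trunc (quot LG s) M" using h unfolding trunc_def by auto
    hence "t @ [e] \<in> pre A" using cA tA h unfolding controllable_def by blast
    thus "t @ [e] \<in> pre B" using preB h unfolding trunc_def by auto
  qed
  have "B \<subseteq> f_optm Euc LG K N s" unfolding f_optm_def supcon_def using Bsub cB by blast
  moreover have "[\<sigma>] \<in> pre B" using preB uA N unfolding pre_def by auto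
  ultimately show ?thesis using pre_mono by blast
qed

theorem theorem8:
  fixes Euc :: "('a::finite) set"
    and LG Lm K :: "'a list set"
    and N M :: nat
  assumes "LG = pre Lm"
    and "K \<subseteq> Lm"
    and "K = pre K \<inter> Lm"
    and "N \<ge> 1" and "M \<ge> 1"
  shows "closed_loop LG (policy Euc LG (f_cons Euc LG K M))
         \<subseteq> closed_loop LG (policy Euc LG (f_optm Euc LG K N))"
proof
  fix x assume "x \<in> closed_loop LG (policy Euc LG (f_cons Euc LG K M))"
  thus "x \<in> closed_loop LG (policy Euc LG (f_optm Euc LG K N))"
  proof (induction rule: closed_loop.induct)
    case Nil thus ?case by (rule closed_loop.Nil)
  next
    case (snoc s \<sigma>)
    have k: "[\<sigma>] \<in> pre (f_cons Euc LG K M s) \<Longrightarrow> [\<sigma>] \<in> pre (f_optm Euc LG K N s)"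
      by (rule key[OF assms(4) assms(5)])
    have "\<sigma> \<in> policy Euc LG (f_optm Euc LG K N) s"
      using snoc.hyps(3) k unfolding policy_def by blast
    thus ?case by (rule closed_loop.snoc[OF snoc.IH snoc.hyps(2)])
  qed
qed

end
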